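(* Let $G$ be a graph with vertex set $[n]$. For any Hamiltonian path $\pi\in\mathrm{Ham}(G)$, the number of $G$-friendship parking functions $p$ with $\mathcal{O}_G(p)=\pi$ equals $\prod_{i\in[n]} b(i,\pi,G)$. Consequently $|\mathrm{FPF}(G)|=\sum_{\pi\in\mathrm{Ham}(G)}\prod_{i\in[n]} b(i,\pi,G)$.
   Context: $[n]=\{1,\dots,n\}$, $S_n$ is the set of permutations of $[n]$ in one-line notation $\pi=\pi_1\cdots\pi_n$. Friendship parking process for a graph $G$ on $[n]$ and a parking preference $p\in[n]^n$: cars $1,\dots,n$ enter in order into spots $1,\dots,n$ (initially empty); spot $k$ is available for car $i$ if it is unoccupied when $i$ enters and each of spots $k-1,k+1$ is unoccupied or occupied by a car adjacent to $i$ in $G$ (spots $0,n+1$ count as unoccupied); car $i$ parks in the first available spot $k\ge p_i$, failing otherwise. $\mathrm{FPF}(G)$ is the set of $p$ for which all cars park; for such $p$, $\mathcal{O}_G(p)=\pi\in S_n$ where $\pi_k$ is the car in spot $k$ at the end. $\mathrm{Ham}(G)$ is the set of permutations $\pi\in S_n$ with $\{\pi_k,\pi_{k+1}\}$ an edge of $G$ for all $k\in[n-1]$. Blockers: for $\pi\in\mathrm{Ham}(G)$ and $i\in[n]$, an element $j=\pi_k$ is a blocker for $i$ in $\pi$ if either (1) $j\le i$, or (2) $j>i$ and there is $\ell\in\{\pi_{k-1},\pi_{k+1}\}$ with $\ell<i$ and $\ell$ not adjacent to $i$ in $G$. The blocking sequence $B(i,\pi,G)$ is the longest contiguous block of $\pi$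 ending at $i$ all of whose elements are blockers for $i$; $b(i,\pi,G)$ is its length. *)

theory Defs
  imports Main
begin

text \<open>A graph on [n] is given by a symmetric irreflexive adjacency relation E.
Cars and spots are numbered 1..n. A parking preference is a list p of length n
with entries in {1..n}; car i prefers spot p ! (i - 1). A permutation in
one-line notation is a list pi of length n with pi ! (k - 1) = pi_k.
A parking state maps each spot to the car occupying it (None = empty).\<close>

definition spot_ok :: "(nat \<Rightarrow> nat \<Rightarrow> bool) \<Rightarrow> (nat \<Rightarrow> nat option) \<Rightarrow> nat \<Rightarrow> nat \<Rightarrow> bool" where
  "spot_ok E st i k = (case st k of None \<Rightarrow> True | Some j \<Rightarrow> E i j)"

definition available :: "(nat \<Rightarrow> nat \<Rightarrow> bool) \<Rightarrow> nat \<Rightarrow> (nat \<Rightarrow> nat option) \<Rightarrow> nat \<Rightarrow> nat \<Rightarrow> bool" where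
  "available E n st i k \<longleftrightarrow> 1 \<le> k \<and> k \<le> n \<and> st k = None
     \<and> (k = 1 \<or> spot_ok E st i (k - 1)) \<and> (k = n \<or> spot_ok E st i (k + 1))"

fun parking :: "(nat \<Rightarrow> nat \<Rightarrow> bool) \<Rightarrow> nat \<Rightarrow> nat list \<Rightarrow> nat \<Rightarrow> (nat \<Rightarrow> nat option) option" where
  "parking E n p 0 = Some (\<lambda>k. None)"
| "parking E n p (Suc m) =
     (case parking E n p m of
        None \<Rightarrow> None
      | Some st \<Rightarrow>
          (if \<exists>k. p ! m \<le> k \<and> available E n st (Suc m) k
           then Some (st((LEAST k. p ! m \<le> k \<and> available E n st (Suc m) k) := Some (Suc m)))
           else None))"

definition FPF :: "(nat \<Rightarrow> nat \<Rightarrow> bool) \<Rightarrow> nat \<Rightarrow> nat list set" where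
  "FPF E n = {p. length p = n \<and> set p \<subseteq> {1..n} \<and> parking E n p n \<noteq> None}"

definition outcome :: "(nat \<Rightarrow> nat \<Rightarrow> bool) \<Rightarrow> nat \<Rightarrow> nat list \<Rightarrow> nat list" where
  "outcome E n p = map (\<lambda>k. the (the (parking E n p n) k)) [1..<n+1]"

definition Ham :: "(nat \<Rightarrow> nat \<Rightarrow> bool) \<Rightarrow> nat \<Rightarrow> nat list set" where
  "Ham E n = {\<pi>. length \<pi> = n \<and> distinct \<pi> \<and> set \<pi> = {1..n}
                \<and> (\<forall>k. k + 1 < n \<longrightarrow> E (\<pi> ! k) (\<pi> ! (k + 1)))}"

text \<open>Position k is 0-based here: element pi ! k is a blocker for i.\<close>
definition is_blocker :: "(nat \<Rightarrow> nat \<Rightarrow> bool) \<Rightarrow> nat list \<Rightarrow> nat \<Rightarrow> nat \<Rightarrow> bool" where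
  "is_blocker E \<pi> i k \<longleftrightarrow> \<pi> ! k \<le> i \<or>
     (\<pi> ! k > i \<and>
       ((0 < k \<and> \<pi> ! (k - 1) < i \<and> \<not> E (\<pi> ! (k - 1)) i) \<or>
        (k + 1 < length \<pi> \<and> \<pi> ! (k + 1) < i \<and> \<not> E (\<pi> ! (k + 1)) i)))"

definition pos :: "nat list \<Rightarrow> nat \<Rightarrow> nat" where
  "pos \<pi> i = (THE q. q < length \<pi> \<and> \<pi> ! q = i)"

text \<open>b(i,pi,G): length of the longest contiguous block of blockers ending at i.\<close>
definition blen :: "(nat \<Rightarrow> nat \<Rightarrow> bool) \<Rightarrow> nat list \<Rightarrow> nat \<Rightarrow> nat" where
  "blen E \<pi> i = Max {m. m \<le> Suc (pos \<pi> i) \<and> (\<forall>t<m. is_blocker E \<pi> i (pos \<pi> i - t))}"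

end

theory Submission
  imports Defs
begin

definition Sst :: "nat list \<Rightarrow> nat \<Rightarrow> nat \<Rightarrow> nat option" where
  "Sst \<pi> m k = (if 1 \<le> k \<and> k \<le> length \<pi> \<and> \<pi> ! (k - 1) \<le> m then Some (\<pi> ! (k - 1)) else None)"

definition cnd :: "(nat \<Rightarrow> nat \<Rightarrow> bool) \<Rightarrow> nat list \<Rightarrow> nat \<Rightarrow> nat \<Rightarrow> bool" where
  "cnd E \<pi> c x \<longleftrightarrow> x \<le> Suc (pos \<pi> c) \<and> Suc (pos \<pi> c) - x < blen E \<pi> c"

lemma pos_props:
  assumes "distinct \<pi>" "c \<in> set \<pi>"
  shows "pos \<pi> c < length \<pi> \<and> \<pi> ! pos \<pi> c = c"
proof -
  obtain q where q: "q < length \<pi>" "\<pi> ! q = c" using assms(2) by (auto simp: in_set_conv_nth)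
  have "\<exists>!q. q < length \<pi> \<and> \<pi> ! q = c"
    using q assms(1) by (metis nth_eq_iff_index_eq)
  then show ?thesis unfolding pos_def by (rule theI')
qed

lemma pos_eq:
  assumes "distinct \<pi>" "q < length \<pi>"
  shows "pos \<pi> (\<pi> ! q) = q"
  using pos_props[OF assms(1), of "\<pi> ! q"] assms nth_eq_iff_index_eq by auto

lemma blen_iff:
  assumes "distinct \<pi>" "c \<in> set \<pi>" "r \<le> Suc (pos \<pi> c)"
  shows "r \<le> blen E \<pi> c \<longleftrightarrow> (\<forall>t<r. is_blocker E \<pi> c (pos \<pi> c - t))"
proof -
  define M where "M = {m. m \<le> Suc (pos \<pi> c) \<and> (\<forall>t<m. is_blocker E \<pi> c (pos \<pi> c - t))}"
  have fin: "finite M" unfolding M_def by (rule finite_subset[of _ "{..Suc (pos \<pi> c)}"]) auto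
  have ne: "0 \<in> M" unfolding M_def by auto
  have b: "blen E \<pi> c = Max M" unfolding blen_def M_def by simp
  have mx: "Max M \<in> M" using fin ne by (metis Max_in empty_iff)
  show ?thesis
  proof
    assume "r \<le> blen E \<pi> c"
    then show "\<forall>t<r. is_blocker E \<pi> c (pos \<pi> c - t)" using mx b unfolding M_def by auto
  next
    assume "\<forall>t<r. is_blocker E \<pi> c (pos \<pi> c - t)"
    then have "r \<in> M" using assms(3) unfolding M_def by auto
    then show "r \<le> blen E \<pi> c" using b fin by simp
  qed
qed

lemma blen_bounds:
  assumes "distinct \<pi>" "c \<in> set \<pi>"
  shows "1 \<le> blen E \<pi> c \<and> blen E \<pi> c \<le> Suc (pos \<pi> c)"
proof -
  define M where "M = {m. m \<le> Suc (pos \<pi> c) \<and> (\<forall>t<m. is_blocker E \<pi> c (pos \<pi> c - t))}"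
  have fin: "finite M" unfolding M_def by (rule finite_subset[of _ "{..Suc (pos \<pi> c)}"]) auto
  have ne: "0 \<in> M" unfolding M_def by auto
  have b: "blen E \<pi> c = Max M" unfolding blen_def M_def by simp
  have mx: "Max M \<in> M" using fin ne by (metis Max_in empty_iff)
  have "is_blocker E \<pi> c (pos \<pi> c)" using pos_props[OF assms] unfolding is_blocker_def by simp
  then have "1 \<in> M" unfolding M_def by auto
  then show ?thesis using mx b fin unfolding M_def by auto
qed


lemma parking_inv:
  assumes sym: "\<And>x y. E x y \<Longrightarrow> E y x"
  shows "parking E n p m = Some st \<Longrightarrow>
    (\<forall>k. st k \<noteq> None \<longrightarrow> 1 \<le> k \<and> k \<le> n) \<and> (\<forall>k j. st k = Some j \<longrightarrow> 1 \<le> j \<and> j \<le> m)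
    \<and> (\<forall>k k' j. st k = Some j \<longrightarrow> st k' = Some j \<longrightarrow> k = k') \<and> card (dom st) = m
    \<and> (\<forall>k j j'. st k = Some j \<longrightarrow> st (Suc k) = Some j' \<longrightarrow> E j j')"
proof (induction m arbitrary: st)
  case 0
  then show ?case by auto
next
  case (Suc m)
  obtain st0 where st0: "parking E n p m = Some st0"
    using Suc.prems by (cases "parking E n p m") auto
  let ?P = "\<lambda>k. p ! m \<le> k \<and> available E n st0 (Suc m) k"
  have ex: "\<exists>k. ?P k" using Suc.prems st0 by (auto split: if_splits)
  define L where "L = (LEAST k. ?P k)"
  have PL: "?P L" unfolding L_def using ex by (rule LeastI_ex)
  have st: "st = st0(L := Some (Suc m))" using Suc.prems st0 ex by (simp add: L_def)
  note IH0 = Suc.IH[OF st0]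
  note I1 = IH0[THEN conjunct1]
  note I2 = IH0[THEN conjunct2, THEN conjunct1]
  note I3 = IH0[THEN conjunct2, THEN conjunct2, THEN conjunct1]
  note I4 = IH0[THEN conjunct2, THEN conjunct2, THEN conjunct2, THEN conjunct1]
  note I5 = IH0[THEN conjunct2, THEN conjunct2, THEN conjunct2, THEN conjunct2]
  note IH = I1 I2 I3 I5
  have av: "1 \<le> L" "L \<le> n" "st0 L = None" "L = 1 \<or> spot_ok E st0 (Suc m) (L - 1)"
    "L = n \<or> spot_ok E st0 (Suc m) (L + 1)"
    using PL unfolding available_def by auto
  have "dom st0 \<subseteq> {1..n}" using I1 by auto
  then have fin: "finite (dom st0)" using finite_subset by blast
  have d: "dom st = insert L (dom st0)" "L \<notin> dom st0" using st av by auto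
  have c: "card (dom st) = Suc m" using d fin I4 by simp
  have adj: "E j j'" if "st k = Some j" "st (Suc k) = Some j'" for k j j'
  proof (cases "k = L")
    case True
    then have "st0 (Suc L) = Some j'" "j = Suc m" using that st by auto
    moreover have "L \<noteq> n" using IH \<open>st0 (Suc L) = Some j'\<close> by fastforce
    ultimately show ?thesis using av(5) unfolding spot_ok_def by auto
  next
    case False
    show ?thesis
    proof (cases "Suc k = L")
      case True
      then have "st0 k = Some j" "j' = Suc m" using that st False by auto
      moreover have "L \<noteq> 1" using IH \<open>st0 k = Some j\<close> True by fastforce
      ultimately show ?thesis using av(4) True sym unfolding spot_ok_def by auto
    next
      case False2: False
      then show ?thesis using that st False IH by auto
    qed
  qed
  have r1: "\<forall>k. st k \<noteq> None \<longrightarrow> 1 \<le> k \<and> k \<le> n" using IH av st by auto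
  have r2: "\<forall>k j. st k = Some j \<longrightarrow> 1 \<le> j \<and> j \<le> Suc m"
  proof (intro allI impI)
    fix k j assume "st k = Some j"
    then show "1 \<le> j \<and> j \<le> Suc m" using IH st by (cases "k = L") force+
  qed
  have r3: "\<forall>k k' j. st k = Some j \<longrightarrow> st k' = Some j \<longrightarrow> k = k'"
  proof (intro allI impI)
    fix k k' j assume a: "st k = Some j" "st k' = Some j"
    show "k = k'"
    proof (cases "k = L \<or> k' = L")
      case True
      then show ?thesis using a IH st by (metis Suc_n_not_le_n fun_upd_apply option.inject)
    next
      case False
      then show ?thesis using a IH st by auto
    qed
  qed
  show ?case using r1 r2 r3 c adj by blast
qed



lemma FPF_state:
  assumes sym: "\<And>x y. E x y \<Longrightarrow> E y x" and p: "p \<in> FPF E n"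
  obtains st where "parking E n p n = Some st" "\<And>k. k < n \<Longrightarrow> st (Suc k) = Some (outcome E n p ! k)"
    "\<And>k j. st k = Some j \<Longrightarrow> 1 \<le> j \<and> j \<le> n"
    "\<And>k k' j. st k = Some j \<Longrightarrow> st k' = Some j \<Longrightarrow> k = k'"
    "\<And>k j j'. st k = Some j \<Longrightarrow> st (Suc k) = Some j' \<Longrightarrow> E j j'"
    "\<And>k. st k \<noteq> None \<Longrightarrow> 1 \<le> k \<and> k \<le> n"
proof -
  obtain st where st: "parking E n p n = Some st" using p unfolding FPF_def by auto
  note IH0 = parking_inv[OF sym st]
  note I1 = IH0[THEN conjunct1]
  note I2 = IH0[THEN conjunct2, THEN conjunct1]
  note I3 = IH0[THEN conjunct2, THEN conjunct2, THEN conjunct1]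
  note I4 = IH0[THEN conjunct2, THEN conjunct2, THEN conjunct2, THEN conjunct1]
  note I5 = IH0[THEN conjunct2, THEN conjunct2, THEN conjunct2, THEN conjunct2]
  have sub: "dom st \<subseteq> {1..n}" using I1 by auto
  have dm: "dom st = {1..n}" using card_subset_eq[OF _ sub] I4 by simp
  have "st (Suc k) = Some (outcome E n p ! k)" if "k < n" for k
  proof -
    have "Suc k \<in> dom st" using dm that by auto
    then obtain j where "st (Suc k) = Some j" by auto
    moreover have "outcome E n p ! k = the (st (Suc k))"
      unfolding outcome_def using that st by (simp del: upt_Suc)
    ultimately show ?thesis by simp
  qed
  then show ?thesis using that st I1 I2 I3 I5 by blast
qed

lemma outcome_Ham:
  assumes sym: "\<And>x y. E x y \<Longrightarrow> E y x" and p: "p \<in> FPF E n"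
  shows "outcome E n p \<in> Ham E n"
proof -
  obtain st where st: "parking E n p n = Some st" "\<And>k. k < n \<Longrightarrow> st (Suc k) = Some (outcome E n p ! k)"
    "\<And>k j. st k = Some j \<Longrightarrow> 1 \<le> j \<and> j \<le> n"
    "\<And>k k' j. st k = Some j \<Longrightarrow> st k' = Some j \<Longrightarrow> k = k'"
    "\<And>k j j'. st k = Some j \<Longrightarrow> st (Suc k) = Some j' \<Longrightarrow> E j j'"
    "\<And>k. st k \<noteq> None \<Longrightarrow> 1 \<le> k \<and> k \<le> n"
    using FPF_state[OF sym p] by blast
  let ?o = "outcome E n p"
  have len: "length ?o = n" unfolding outcome_def by simp
  have dist: "distinct ?o"
    unfolding distinct_conv_nth len
  proof (intro allI impI)
    fix a b assume "a < n" "b < n" "a \<noteq> b"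
    then show "?o ! a \<noteq> ?o ! b" using st(2)[of a] st(2)[of b] st(4)[of "Suc a" _ "Suc b"] by auto
  qed
  have sub: "set ?o \<subseteq> {1..n}"
  proof
    fix x assume "x \<in> set ?o"
    then obtain k where "k < n" "?o ! k = x" using len by (auto simp: in_set_conv_nth)
    then show "x \<in> {1..n}" using st(2)[of k] st(3) by fastforce
  qed
  have "card (set ?o) = n" using distinct_card[OF dist] len by simp
  then have seteq: "set ?o = {1..n}" using card_subset_eq[OF _ sub] by simp
  have "E (?o ! k) (?o ! (k + 1))" if "k + 1 < n" for k
    using st(2)[of k] st(2)[of "k+1"] st(5)[of "Suc k"] that by simp
  then show ?thesis unfolding Ham_def using len dist seteq by blast
qed



lemma ham_basic:
  assumes "\<pi> \<in> Ham E n"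
  shows "length \<pi> = n" "distinct \<pi>" "set \<pi> = {1..n}" "\<And>k. k + 1 < n \<Longrightarrow> E (\<pi> ! k) (\<pi> ! (k + 1))"
  using assms unfolding Ham_def by auto

lemma ham_pos:
  assumes "\<pi> \<in> Ham E n" "1 \<le> c" "c \<le> n"
  shows "pos \<pi> c < n" "\<pi> ! pos \<pi> c = c"
  using pos_props[of \<pi> c] ham_basic[OF assms(1)] assms(2,3) by auto

lemma Sst_upd:
  assumes "\<pi> \<in> Ham E n" "Suc m \<le> n"
  shows "Sst \<pi> (Suc m) = (Sst \<pi> m)(Suc (pos \<pi> (Suc m)) := Some (Suc m))"
proof
  fix k
  note hb = ham_basic[OF assms(1)]
  note hp = ham_pos[OF assms(1), of "Suc m"]
  show "Sst \<pi> (Suc m) k = ((Sst \<pi> m)(Suc (pos \<pi> (Suc m)) := Some (Suc m))) k"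
  proof (cases "k = Suc (pos \<pi> (Suc m))")
    case True
    then show ?thesis using hp assms hb unfolding Sst_def by auto
  next
    case False
    have "1 \<le> k \<Longrightarrow> k \<le> n \<Longrightarrow> \<pi> ! (k - 1) \<noteq> Suc m"
      using pos_eq[OF hb(2), of "k - 1"] hb(1) False by auto
    then show ?thesis using False hb unfolding Sst_def by auto
  qed
qed

lemma Sst_avail_spot:
  assumes sym: "\<And>x y. E x y \<Longrightarrow> E y x" and ham: "\<pi> \<in> Ham E n" and mn: "Suc m \<le> n"
  shows "available E n (Sst \<pi> m) (Suc m) (Suc (pos \<pi> (Suc m)))"
proof -
  note hb = ham_basic[OF ham]
  note hp = ham_pos[OF ham, of "Suc m"]
  define q where "q = pos \<pi> (Suc m)"
  have q: "q < n" "\<pi> ! q = Suc m" using hp mn q_def by auto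
  have l: "Suc q = 1 \<or> spot_ok E (Sst \<pi> m) (Suc m) (Suc q - 1)"
  proof (cases q)
    case (Suc r)
    have "E (\<pi> ! r) (\<pi> ! (r + 1))" using hb(4)[of r] Suc q by auto
    then have "E (Suc m) (\<pi> ! r)" using sym Suc q by auto
    then show ?thesis using Suc unfolding spot_ok_def Sst_def by auto
  qed simp
  have r: "Suc q = n \<or> spot_ok E (Sst \<pi> m) (Suc m) (Suc q + 1)"
  proof (cases "Suc q = n")
    case False
    then have "E (\<pi> ! q) (\<pi> ! (q + 1))" using hb(4)[of q] q by auto
    then show ?thesis using q unfolding spot_ok_def Sst_def by auto
  qed simp
  show ?thesis using l r q hb unfolding available_def q_def[symmetric] by (auto simp: Sst_def)
qed

lemma Sst_avail_iff:
  assumes sym: "\<And>x y. E x y \<Longrightarrow> E y x" and ham: "\<pi> \<in> Ham E n" and mn: "Suc m \<le> n"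
    and k: "1 \<le> k" "k \<le> n" "k \<noteq> Suc (pos \<pi> (Suc m))"
  shows "available E n (Sst \<pi> m) (Suc m) k \<longleftrightarrow> \<not> is_blocker E \<pi> (Suc m) (k - 1)"
proof -
  note hb = ham_basic[OF ham]
  have ne: "\<pi> ! (k - 1) \<noteq> Suc m"
    using pos_eq[OF hb(2), of "k - 1"] hb(1) k by auto
  have symE: "E a b = E b a" for a b using sym by blast
  have A: "Sst \<pi> m k = None \<longleftrightarrow> \<pi> ! (k - 1) > Suc m" using k ne hb(1) unfolding Sst_def by auto
  have L: "(k = 1 \<or> spot_ok E (Sst \<pi> m) (Suc m) (k - 1)) \<longleftrightarrow>
      \<not> (0 < k - 1 \<and> \<pi> ! (k - 1 - 1) < Suc m \<and> \<not> E (\<pi> ! (k - 1 - 1)) (Suc m))"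
  proof (cases "k = 1")
    case False
    then have "k - 1 \<ge> 1" "k - 1 \<le> length \<pi>" "k - 1 - 1 = k - 1 - 1" using k hb(1) by auto
    then show ?thesis using False unfolding spot_ok_def Sst_def by (auto simp: symE)
  qed simp
  have R: "(k = n \<or> spot_ok E (Sst \<pi> m) (Suc m) (k + 1)) \<longleftrightarrow>
      \<not> (k - 1 + 1 < length \<pi> \<and> \<pi> ! (k - 1 + 1) < Suc m \<and> \<not> E (\<pi> ! (k - 1 + 1)) (Suc m))"
  proof (cases "k = n")
    case False
    then have "k + 1 \<le> length \<pi>" "k - 1 + 1 = k" using k hb(1) by auto
    then show ?thesis using False k unfolding spot_ok_def Sst_def by (auto simp: symE)
  next
    case True
    then show ?thesis using k hb(1) by auto
  qed
  have "available E n (Sst \<pi> m) (Suc m) k \<longleftrightarrow> Sst \<pi> m k = None \<and>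
      (k = 1 \<or> spot_ok E (Sst \<pi> m) (Suc m) (k - 1)) \<and> (k = n \<or> spot_ok E (Sst \<pi> m) (Suc m) (k + 1))"
    using k unfolding available_def by auto
  also have "\<dots> \<longleftrightarrow> \<not> is_blocker E \<pi> (Suc m) (k - 1)"
    unfolding A L R is_blocker_def using ne by auto
  finally show ?thesis .
qed



lemma step_iff:
  assumes sym: "\<And>x y. E x y \<Longrightarrow> E y x" and ham: "\<pi> \<in> Ham E n" and mn: "Suc m \<le> n"
    and x: "1 \<le> x"
  shows "((\<exists>k. x \<le> k \<and> available E n (Sst \<pi> m) (Suc m) k) \<and>
          (LEAST k. x \<le> k \<and> available E n (Sst \<pi> m) (Suc m) k) = Suc (pos \<pi> (Suc m)))
         \<longleftrightarrow> cnd E \<pi> (Suc m) x"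
proof -
  note hb = ham_basic[OF ham]
  define q where "q = pos \<pi> (Suc m)"
  have q: "q < n" "\<pi> ! q = Suc m" using ham_pos[OF ham, of "Suc m"] mn q_def by auto
  have cin: "Suc m \<in> set \<pi>" using hb(3) mn by auto
  let ?P = "\<lambda>k. x \<le> k \<and> available E n (Sst \<pi> m) (Suc m) k"
  have avs: "available E n (Sst \<pi> m) (Suc m) (Suc q)"
    using Sst_avail_spot[OF sym ham mn] q_def by simp
  have avk: "available E n (Sst \<pi> m) (Suc m) k \<longleftrightarrow> \<not> is_blocker E \<pi> (Suc m) (k - 1)"
    if "1 \<le> k" "k < Suc q" for k
    using Sst_avail_iff[OF sym ham mn, of k] that q q_def by auto
  have bi: "r \<le> blen E \<pi> (Suc m) \<longleftrightarrow> (\<forall>t<r. is_blocker E \<pi> (Suc m) (q - t))" if "r \<le> Suc q" for r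
    using blen_iff[OF hb(2) cin, of r E] that q_def by simp
  show ?thesis unfolding q_def[symmetric]
  proof
    assume a: "(\<exists>k. ?P k) \<and> (LEAST k. ?P k) = Suc q"
    have xs: "x \<le> Suc q" using LeastI_ex[of ?P] a by auto
    have "Suc q - x + 1 \<le> blen E \<pi> (Suc m)"
    proof (subst bi)
      show "\<forall>t<Suc q - x + 1. is_blocker E \<pi> (Suc m) (q - t)"
      proof (intro allI impI)
        fix t assume t: "t < Suc q - x + 1"
        show "is_blocker E \<pi> (Suc m) (q - t)"
        proof (cases t)
          case 0
          then show ?thesis using q unfolding is_blocker_def by simp
        next
          case (Suc t')
          define k where "k = Suc q - t"
          have k: "x \<le> k" "k < Suc q" "1 \<le> k" using t Suc x k_def by auto
          have "\<not> ?P k" using not_less_Least[of k ?P] a k by auto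
          then have "\<not> available E n (Sst \<pi> m) (Suc m) k" using k by auto
          then have "is_blocker E \<pi> (Suc m) (k - 1)" using avk k by auto
          moreover have "k - 1 = q - t" using k_def Suc t by auto
          ultimately show ?thesis by simp
        qed
      qed
      show "Suc q - x + 1 \<le> Suc q" using x xs by auto
    qed
    then show "cnd E \<pi> (Suc m) x" unfolding cnd_def q_def[symmetric] using xs by auto
  next
    assume c: "cnd E \<pi> (Suc m) x"
    have xs: "x \<le> Suc q" and lt: "Suc q - x < blen E \<pi> (Suc m)" using c unfolding cnd_def q_def by auto
    have blk: "\<forall>t<Suc q - x + 1. is_blocker E \<pi> (Suc m) (q - t)"
      using bi[of "Suc q - x + 1"] lt x xs by auto
    have "(LEAST k. ?P k) = Suc q"
    proof (rule Least_equality)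
      show "?P (Suc q)" using xs avs by simp
      fix k assume pk: "?P k"
      show "Suc q \<le> k"
      proof (rule ccontr)
        assume "\<not> Suc q \<le> k"
        then have k: "k < Suc q" "1 \<le> k" "x \<le> k" using pk x by auto
        have "Suc q - k < Suc q - x + 1" using k by auto
        then have "is_blocker E \<pi> (Suc m) (q - (Suc q - k))" using blk by blast
        moreover have "q - (Suc q - k) = k - 1" using k by auto
        ultimately show False using avk[OF k(2) k(1)] pk by auto
      qed
    qed
    then show "(\<exists>k. ?P k) \<and> (LEAST k. ?P k) = Suc q" using xs avs by auto
  qed
qed

lemma Sst_zero:
  assumes ham: "\<pi> \<in> Ham E n"
  shows "Sst \<pi> 0 = (\<lambda>k. None)"
proof
  fix k
  note hb = ham_basic[OF ham]
  show "Sst \<pi> 0 k = None"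
  proof (cases "1 \<le> k \<and> k \<le> length \<pi>")
    case True
    then have "\<pi> ! (k - 1) \<in> set \<pi>" by auto
    then show ?thesis using hb(3) unfolding Sst_def by auto
  qed (auto simp: Sst_def)
qed

lemma parkA:
  assumes sym: "\<And>x y. E x y \<Longrightarrow> E y x" and ham: "\<pi> \<in> Ham E n"
    and p: "length p = n" "set p \<subseteq> {1..n}"
  shows "m \<le> n \<Longrightarrow> parking E n p m = Some (Sst \<pi> m) \<longleftrightarrow> (\<forall>i<m. cnd E \<pi> (Suc i) (p ! i))"
proof (induction m)
  case 0
  then show ?case using Sst_zero[OF ham] by simp
next
  case (Suc m)
  note hb = ham_basic[OF ham]
  define q where "q = pos \<pi> (Suc m)"
  have q: "q < n" "\<pi> ! q = Suc m" using ham_pos[OF ham, of "Suc m"] Suc.prems q_def by auto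
  have x: "1 \<le> p ! m" using p Suc.prems by (metis atLeastAtMost_iff in_mono nth_mem Suc_le_lessD)
  let ?P = "\<lambda>k. p ! m \<le> k \<and> available E n (Sst \<pi> m) (Suc m) k"
  note st = step_iff[OF sym ham Suc.prems x]
  note upd = Sst_upd[OF ham Suc.prems]
  have IH: "parking E n p m = Some (Sst \<pi> m) \<longleftrightarrow> (\<forall>i<m. cnd E \<pi> (Suc i) (p ! i))"
    using Suc by simp
  show ?case
  proof
    assume a: "\<forall>i<Suc m. cnd E \<pi> (Suc i) (p ! i)"
    then have pm: "parking E n p m = Some (Sst \<pi> m)" using IH by auto
    have "(\<exists>k. ?P k) \<and> (LEAST k. ?P k) = Suc q" using st a q_def by auto
    then show "parking E n p (Suc m) = Some (Sst \<pi> (Suc m))" using pm upd q_def by simp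
  next
    assume a: "parking E n p (Suc m) = Some (Sst \<pi> (Suc m))"
    obtain st0 where st0: "parking E n p m = Some st0"
      using a by (cases "parking E n p m") auto
    have ex: "\<exists>k. p ! m \<le> k \<and> available E n st0 (Suc m) k"
      using a st0 by (auto split: if_splits)
    define L where "L = (LEAST k. p ! m \<le> k \<and> available E n st0 (Suc m) k)"
    have PL: "p ! m \<le> L \<and> available E n st0 (Suc m) L" unfolding L_def using ex by (rule LeastI_ex)
    have eq: "Sst \<pi> (Suc m) = st0(L := Some (Suc m))" using a st0 ex by (simp add: L_def)
    have vals: "\<forall>k j. st0 k = Some j \<longrightarrow> 1 \<le> j \<and> j \<le> m"
      using parking_inv[OF sym st0] by blast
    have "Sst \<pi> (Suc m) L = Some (Suc m)" using eq by simp
    then have L1: "1 \<le> L" "L \<le> n" "\<pi> ! (L - 1) = Suc m" using hb(1) unfolding Sst_def by (auto split: if_splits)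
    then have "pos \<pi> (Suc m) = L - 1" using pos_eq[OF hb(2), of "L - 1"] hb(1) by auto
    then have Lq: "L = Suc q" using L1 q_def by auto
    have "st0 = Sst \<pi> m"
    proof
      fix k
      show "st0 k = Sst \<pi> m k"
      proof (cases "k = L")
        case True
        then have "st0 k = None" using PL unfolding available_def by auto
        moreover have "Sst \<pi> m k = None" using True Lq q unfolding Sst_def by auto
        ultimately show ?thesis by simp
      next
        case False
        have "st0 k = Sst \<pi> (Suc m) k" using eq False by simp
        also have "\<dots> = Sst \<pi> m k" using upd False Lq q_def by simp
        finally show ?thesis .
      qed
    qed
    then have pm: "parking E n p m = Some (Sst \<pi> m)" using st0 by simp
    have "(\<exists>k. ?P k) \<and> (LEAST k. ?P k) = Suc q"
      using ex PL L_def Lq \<open>st0 = Sst \<pi> m\<close> by auto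
    then have "cnd E \<pi> (Suc m) (p ! m)" using st q_def by auto
    then show "\<forall>i<Suc m. cnd E \<pi> (Suc i) (p ! i)" using pm IH less_Suc_eq by auto
  qed
qed



lemma all_less_Suc_cons:
  "(\<forall>j<Suc n. (x # ys) ! j \<in> A j) \<longleftrightarrow> x \<in> A 0 \<and> (\<forall>j<n. ys ! j \<in> A (Suc j))"
  by (auto simp: less_Suc_eq_0_disj)

lemma card_lists_prod:
  "(\<And>j. j < n \<Longrightarrow> finite (A j)) \<Longrightarrow>
   card {xs. length xs = n \<and> (\<forall>j<n. xs ! j \<in> A j)} = (\<Prod>j<n. card (A j))"
proof (induction n arbitrary: A)
  case 0
  then show ?case by simp
next
  case (Suc n)
  let ?B = "{ys. length ys = n \<and> (\<forall>j<n. ys ! j \<in> A (Suc j))}"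
  have eq: "{xs. length xs = Suc n \<and> (\<forall>j<Suc n. xs ! j \<in> A j)} = (\<lambda>(x, ys). x # ys) ` (A 0 \<times> ?B)"
  proof
    show "{xs. length xs = Suc n \<and> (\<forall>j<Suc n. xs ! j \<in> A j)} \<subseteq> (\<lambda>(x, ys). x # ys) ` (A 0 \<times> ?B)"
    proof
      fix xs assume "xs \<in> {xs. length xs = Suc n \<and> (\<forall>j<Suc n. xs ! j \<in> A j)}"
      then obtain x ys where "xs = x # ys" "length ys = n" "\<forall>j<Suc n. (x # ys) ! j \<in> A j"
        by (auto simp: length_Suc_conv)
      then have "x \<in> A 0" "ys \<in> ?B" "xs = x # ys" using all_less_Suc_cons[of n x ys A] by auto
      then show "xs \<in> (\<lambda>(x, ys). x # ys) ` (A 0 \<times> ?B)" by (auto intro: rev_image_eqI[where x="(x, ys)"])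
    qed
  next
    show "(\<lambda>(x, ys). x # ys) ` (A 0 \<times> ?B) \<subseteq> {xs. length xs = Suc n \<and> (\<forall>j<Suc n. xs ! j \<in> A j)}"
    proof
      fix xs assume "xs \<in> (\<lambda>(x, ys). x # ys) ` (A 0 \<times> ?B)"
      then obtain x ys where "xs = x # ys" "x \<in> A 0" "ys \<in> ?B" by auto
      then show "xs \<in> {xs. length xs = Suc n \<and> (\<forall>j<Suc n. xs ! j \<in> A j)}"
        using all_less_Suc_cons[of n x ys A] by auto
    qed
  qed
  have inj: "inj_on (\<lambda>(x, ys). x # ys) (A 0 \<times> ?B)" by (auto simp: inj_on_def)
  have "card ?B = (\<Prod>j<n. card (A (Suc j)))" using Suc.IH[of "\<lambda>j. A (Suc j)"] Suc.prems by simp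
  then show ?case unfolding eq card_image[OF inj] card_cartesian_product
    by (simp del: prod.lessThan_Suc add: prod.lessThan_Suc_shift)
qed

lemma lemmaB:
  assumes sym: "\<And>x y. E x y \<Longrightarrow> E y x" and ham: "\<pi> \<in> Ham E n"
  shows "(p \<in> FPF E n \<and> outcome E n p = \<pi>) \<longleftrightarrow>
         (length p = n \<and> set p \<subseteq> {1..n} \<and> parking E n p n = Some (Sst \<pi> n))"
proof
  note hb = ham_basic[OF ham]
  have le: "\<pi> ! k \<le> n" if "k < n" for k
  proof -
    have "\<pi> ! k \<in> set \<pi>" using that hb(1) by simp
    then show ?thesis using hb(3) by simp
  qed
  assume a: "p \<in> FPF E n \<and> outcome E n p = \<pi>"
  obtain st where st: "parking E n p n = Some st" "\<And>k. k < n \<Longrightarrow> st (Suc k) = Some (outcome E n p ! k)"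
    "\<And>k j. st k = Some j \<Longrightarrow> 1 \<le> j \<and> j \<le> n"
    "\<And>k k' j. st k = Some j \<Longrightarrow> st k' = Some j \<Longrightarrow> k = k'"
    "\<And>k j j'. st k = Some j \<Longrightarrow> st (Suc k) = Some j' \<Longrightarrow> E j j'"
    "\<And>k. st k \<noteq> None \<Longrightarrow> 1 \<le> k \<and> k \<le> n"
    using FPF_state[OF sym a[THEN conjunct1]] by blast
  have "st = Sst \<pi> n"
  proof
    fix k
    show "st k = Sst \<pi> n k"
    proof (cases "1 \<le> k \<and> k \<le> n")
      case True
      then have "st k = Some (\<pi> ! (k - 1))" using st(2)[of "k - 1"] a by auto
      then show ?thesis using True le[of "k - 1"] hb(1) unfolding Sst_def by auto
    next
      case False
      then have "st k = None" using st(6)[of k] by blast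
      moreover have "Sst \<pi> n k = None" using False hb(1) unfolding Sst_def by auto
      ultimately show ?thesis by simp
    qed
  qed
  then show "length p = n \<and> set p \<subseteq> {1..n} \<and> parking E n p n = Some (Sst \<pi> n)"
    using a st(1) unfolding FPF_def by auto
next
  note hb = ham_basic[OF ham]
  have le: "\<pi> ! k \<le> n" if "k < n" for k
  proof -
    have "\<pi> ! k \<in> set \<pi>" using that hb(1) by simp
    then show ?thesis using hb(3) by simp
  qed
  assume a: "length p = n \<and> set p \<subseteq> {1..n} \<and> parking E n p n = Some (Sst \<pi> n)"
  have "outcome E n p = \<pi>"
  proof (rule nth_equalityI)
    show "length (outcome E n p) = length \<pi>" using hb unfolding outcome_def by simp
    fix k assume "k < length (outcome E n p)"
    then have k: "k < n" unfolding outcome_def by (simp del: upt_Suc)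
    have "outcome E n p ! k = the (Sst \<pi> n (Suc k))" using a k unfolding outcome_def by (simp del: upt_Suc)
    also have "\<dots> = \<pi> ! k" using k le[OF k] hb(1) unfolding Sst_def by simp
    finally show "outcome E n p ! k = \<pi> ! k" .
  qed
  then show "p \<in> FPF E n \<and> outcome E n p = \<pi>" using a unfolding FPF_def by auto
qed

lemma count_pi:
  assumes sym: "\<And>x y. E x y \<Longrightarrow> E y x" and ham: "\<pi> \<in> Ham E n"
  shows "card {p \<in> FPF E n. outcome E n p = \<pi>} = (\<Prod>i\<in>{1..n}. blen E \<pi> i)"
proof -
  note hb = ham_basic[OF ham]
  define A where "A j = {x. 1 \<le> x \<and> x \<le> n \<and> cnd E \<pi> (Suc j) x}" for j
  have seteq: "{p \<in> FPF E n. outcome E n p = \<pi>} = {xs. length xs = n \<and> (\<forall>j<n. xs ! j \<in> A j)}"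
  proof (intro set_eqI iffI)
    fix p assume "p \<in> {p \<in> FPF E n. outcome E n p = \<pi>}"
    then have a: "length p = n" "set p \<subseteq> {1..n}" "parking E n p n = Some (Sst \<pi> n)"
      using lemmaB[OF sym ham, of p] by auto
    then have "\<forall>i<n. cnd E \<pi> (Suc i) (p ! i)" using parkA[OF sym ham a(1,2), of n] by simp
    moreover have "\<forall>j<n. p ! j \<in> {1..n}" using a(1,2) by (auto simp: set_conv_nth)
    ultimately show "p \<in> {xs. length xs = n \<and> (\<forall>j<n. xs ! j \<in> A j)}" using a(1) unfolding A_def by auto
  next
    fix p assume "p \<in> {xs. length xs = n \<and> (\<forall>j<n. xs ! j \<in> A j)}"
    then have a: "length p = n" "\<forall>j<n. p ! j \<in> A j" by auto
    have s: "set p \<subseteq> {1..n}" using a unfolding A_def by (auto simp: set_conv_nth)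
    have "\<forall>i<n. cnd E \<pi> (Suc i) (p ! i)" using a unfolding A_def by auto
    then have "parking E n p n = Some (Sst \<pi> n)" using parkA[OF sym ham a(1) s, of n] by simp
    then show "p \<in> {p \<in> FPF E n. outcome E n p = \<pi>}" using lemmaB[OF sym ham, of p] a(1) s by auto
  qed
  have cardA: "card (A j) = blen E \<pi> (Suc j)" if j: "j < n" for j
  proof -
    define q where "q = pos \<pi> (Suc j)"
    define B where "B = blen E \<pi> (Suc j)"
    have q: "q < n" using ham_pos[OF ham, of "Suc j"] j q_def by auto
    have cin: "Suc j \<in> set \<pi>" using hb(3) j by auto
    have B: "1 \<le> B" "B \<le> Suc q" using blen_bounds[OF hb(2) cin, of E] B_def q_def by auto
    have "A j = {Suc q + 1 - B..Suc q}"
      unfolding A_def cnd_def q_def[symmetric] B_def[symmetric] using B q by auto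
    then show ?thesis using B B_def by simp
  qed
  have fin: "finite (A j)" for j unfolding A_def by (rule finite_subset[of _ "{1..n}"]) auto
  have "card {p \<in> FPF E n. outcome E n p = \<pi>} = (\<Prod>j<n. card (A j))"
    unfolding seteq by (rule card_lists_prod) (rule fin)
  also have "\<dots> = (\<Prod>j<n. blen E \<pi> (Suc j))" using cardA by simp
  also have "\<dots> = (\<Prod>i\<in>{1..n}. blen E \<pi> i)" by (simp add: prod.atLeast1_atMost_eq)
  finally show ?thesis .
qed

theorem corollary2p7:
  fixes E :: "nat \<Rightarrow> nat \<Rightarrow> bool" and n :: nat
  assumes sym: "\<And>x y. E x y \<Longrightarrow> E y x"
    and irrefl: "\<And>x. \<not> E x x"
  shows "(\<forall>\<pi>\<in>Ham E n. card {p \<in> FPF E n. outcome E n p = \<pi>} = (\<Prod>i\<in>{1..n}. blen E \<pi> i))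
       \<and> card (FPF E n) = (\<Sum>\<pi>\<in>Ham E n. \<Prod>i\<in>{1..n}. blen E \<pi> i)"
proof -
  have P1: "\<forall>\<pi>\<in>Ham E n. card {p \<in> FPF E n. outcome E n p = \<pi>} = (\<Prod>i\<in>{1..n}. blen E \<pi> i)"
    using count_pi[where E=E, OF sym] by blast
  have finL: "finite {xs. set xs \<subseteq> {1..n::nat} \<and> length xs = n}" by (rule finite_lists_length_eq) simp
  have finH: "finite (Ham E n)" by (rule finite_subset[OF _ finL]) (auto simp: Ham_def)
  have finF: "finite {p \<in> FPF E n. outcome E n p = \<pi>}" for \<pi>
    by (rule finite_subset[OF _ finL]) (auto simp: FPF_def)
  have U: "FPF E n = (\<Union>\<pi>\<in>Ham E n. {p \<in> FPF E n. outcome E n p = \<pi>})"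
    using outcome_Ham[where E=E, OF sym] by blast
  have "card (FPF E n) = card (\<Union>\<pi>\<in>Ham E n. {p \<in> FPF E n. outcome E n p = \<pi>})"
    using U by (rule arg_cong)
  also have "\<dots> = (\<Sum>\<pi>\<in>Ham E n. card {p \<in> FPF E n. outcome E n p = \<pi>})"
    by (rule card_UN_disjoint[OF finH]) (use finF in auto)
  also have "\<dots> = (\<Sum>\<pi>\<in>Ham E n. \<Prod>i\<in>{1..n}. blen E \<pi> i)" using P1 by simp
  finally show ?thesis using P1 by blast
qed

end
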